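(* For all integers $n\ge2$ and $1\le p\le n-1$, $$2|\mathbb{S}^n|\ >\ \Big|\mathbb{S}^p\big(\sqrt{p/n}\big)\times\mathbb{S}^{n-p}\big(\sqrt{(n-p)/n}\big)\Big|\ \ge\ \Big|\mathbb{S}^{\lfloor n/2\rfloor}\big(\sqrt{\lfloor n/2\rfloor/n}\big)\times\mathbb{S}^{\lceil n/2\rceil}\big(\sqrt{\lceil n/2\rceil/n}\big)\Big|.$$
   Context: $\mathbb{S}^d(R)$ denotes the round $d$-sphere of radius $R$, $\mathbb{S}^d=\mathbb{S}^d(1)$, and $|\cdot|$ denotes $n$-dimensional volume; $|\mathbb{S}^d|=2\pi^{(d+1)/2}/\Gamma(\tfrac{d+1}{2})$. *)

theory Defs
  imports "HOL-Analysis.Analysis"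
begin

definition unit_sphere_vol :: "nat \<Rightarrow> real" where
  "unit_sphere_vol d = 2 * pi powr (real (d + 1) / 2) / Gamma (real (d + 1) / 2)"

definition sphere_vol :: "nat \<Rightarrow> real \<Rightarrow> real" where
  "sphere_vol d R = unit_sphere_vol d * R ^ d"

definition sphere_prod_vol :: "nat \<Rightarrow> real \<Rightarrow> nat \<Rightarrow> real \<Rightarrow> real" where
  "sphere_prod_vol p r q s = sphere_vol p r * sphere_vol q s"

end

theory Submission imports Defs "HOL-Real_Asymp.Real_Asymp" begin


abbreviation U where "U \<equiv> unit_sphere_vol"

lemma pos_not_nonpos_Int: "(y::real) > 0 \<Longrightarrow> y \<notin> \<int>\<^sub>\<le>\<^sub>0"
  using nonpos_Ints_nonpos by fastforce

lemma Gamma_plus1_pos: "(y::real) > 0 \<Longrightarrow> Gamma (y + 1) = y * Gamma y"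
  using Gamma_plus1 pos_not_nonpos_Int by blast

lemma U_pos: "U d > 0"
  unfolding unit_sphere_vol_def by simp

lemma U_rec: "U (Suc (Suc d)) = 2 * pi * U d / (real d + 1)"
proof -
  define y where "y = real (d+1) / 2"
  have y: "y > 0" by (simp add: y_def)
  have e: "real (Suc (Suc d) + 1) / 2 = y + 1" by (simp add: y_def field_simps)
  have "U (Suc (Suc d)) = 2 * pi powr (y+1) / Gamma (y+1)"
    unfolding unit_sphere_vol_def e ..
  also have "\<dots> = 2 * (pi powr y * pi) / (y * Gamma y)"
    by (simp add: powr_add Gamma_plus1_pos[OF y])
  also have "\<dots> = 2 * pi * (2 * pi powr y / Gamma y) / (real d + 1)"
    using y by (simp add: y_def field_simps)
  also have "2 * pi powr y / Gamma y = U d" unfolding unit_sphere_vol_def y_def ..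
  finally show ?thesis .
qed

lemma U0: "U 0 = 2"
  unfolding unit_sphere_vol_def by (simp add: powr_half_sqrt Gamma_one_half_real)

lemma U1: "U 1 = 2 * pi"
  unfolding unit_sphere_vol_def by simp

lemma Gamma_half_le: assumes "(y::real) > 0" shows "Gamma (y + 1/2)^2 \<le> y * Gamma y ^ 2"
proof -
  have c: "(ln \<circ> Gamma) ((1 - 1/2) *\<^sub>R y + (1/2) *\<^sub>R (y+1)) \<le> (1 - 1/2) * (ln \<circ> Gamma) y + (1/2) * (ln \<circ> Gamma) (y+1)"
    by (rule convex_onD[OF log_convex_Gamma_real]) (use assms in auto)
  have mid: "(1 - 1/2) *\<^sub>R y + (1/2) *\<^sub>R (y+1) = y + 1/2" by (simp add: field_simps)
  from c have "ln (Gamma (y + 1/2)) \<le> (ln (Gamma y) + ln (Gamma (y+1)))/2"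
    unfolding mid by (simp add: algebra_simps)
  moreover have "Gamma y > 0" "Gamma (y+1) > 0" using assms by auto
  ultimately have "2 * ln (Gamma (y + 1/2)) \<le> ln (Gamma y * Gamma (y+1))"
    by (simp add: ln_mult)
  hence "ln (Gamma (y + 1/2)^2) \<le> ln (Gamma y * Gamma (y+1))"
    using assms by (simp add: ln_realpow)
  moreover have "Gamma (y + 1/2) > 0" using assms by simp
  ultimately have "Gamma (y + 1/2)^2 \<le> Gamma y * Gamma (y+1)"
    using \<open>Gamma y > 0\<close> \<open>Gamma (y+1) > 0\<close> by (subst (asm) ln_le_cancel_iff) auto
  also have "\<dots> = y * Gamma y ^ 2" using Gamma_plus1_pos[OF assms] by (simp add: power2_eq_square)
  finally show ?thesis .
qed

lemma aux_eq: "(c::real) \<noteq> 0 \<Longrightarrow> b = c*a \<Longrightarrow> a*b = b^2/c"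
  by (simp add: power2_eq_square)

lemma aux_eq2: "(a::real) \<noteq> 0 \<Longrightarrow> b \<noteq> 0 \<Longrightarrow> 2*(2/a)/(2*b/a) = 2/b"
  by simp

lemma Gamma_half_ge: assumes "(y::real) > 1/2" shows "Gamma y ^ 2 \<le> Gamma (y + 1/2)^2 / (y - 1/2)"
proof -
  have "(ln \<circ> Gamma) ((1 - 1/2) *\<^sub>R (y - 1/2) + (1/2) *\<^sub>R (y+1/2)) \<le> (1 - 1/2) * (ln \<circ> Gamma) (y-1/2) + (1/2) * (ln \<circ> Gamma) (y+1/2)"
    by (rule convex_onD[OF log_convex_Gamma_real]) (use assms in auto)
  hence "ln (Gamma y) \<le> (ln (Gamma (y-1/2)) + ln (Gamma (y+1/2)))/2"
    by (simp add: algebra_simps)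
  moreover have "Gamma (y-1/2) > 0" "Gamma (y+1/2) > 0" using assms by auto
  ultimately have "2 * ln (Gamma y) \<le> ln (Gamma (y-1/2) * Gamma (y+1/2))"
    by (simp add: ln_mult)
  hence "ln (Gamma y^2) \<le> ln (Gamma (y-1/2) * Gamma (y+1/2))"
    using assms by (simp add: ln_realpow)
  moreover have "Gamma y > 0" using assms by auto
  ultimately have "Gamma y^2 \<le> Gamma (y-1/2) * Gamma (y+1/2)"
    using \<open>Gamma (y-1/2) > 0\<close> \<open>Gamma (y+1/2) > 0\<close> by (subst (asm) ln_le_cancel_iff) auto
  also have "Gamma (y+1/2) = (y - 1/2) * Gamma (y - 1/2)"
  proof -
    have e: "y + 1/2 = (y - 1/2) + 1" by simp
    show ?thesis by (subst e, rule Gamma_plus1_pos) (use assms in simp)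
  qed
  hence "Gamma (y-1/2) * Gamma (y+1/2) = Gamma (y + 1/2)^2 / (y - 1/2)"
    using assms aux_eq[of "y - 1/2" "Gamma (y+1/2)" "Gamma (y-1/2)"] by simp
  finally show ?thesis .
qed

lemma ln_lower:
  fixes y :: real assumes "1 \<le> y" shows "2*(y-1)/(y+1) \<le> ln y"
proof -
  let ?f = "\<lambda>y::real. 2*(y-1)/(y+1) - ln y"
  have "?f 1 \<ge> ?f y"
  proof (rule DERIV_nonpos_imp_nonincreasing[OF assms])
    fix x :: real assume x: "1 \<le> x" "x \<le> y"
    have d: "DERIV ?f x :> -((x-1)^2/(x*(x+1)^2))"
      using x
      apply -
      apply (rule derivative_eq_intros refl | simp)+
      apply (subgoal_tac "x + 1 > 0")
        apply (simp add: divide_simps power2_eq_square)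
       apply (simp add: algebra_simps)
      apply simp
      done
    have "-((x-1)^2/(x*(x+1)^2)) \<le> 0" using x by simp
    then show "\<exists>d. DERIV ?f x :> d \<and> d \<le> 0" using d by blast
  qed
  then show ?thesis by simp
qed

definition L :: "real \<Rightarrow> real" where
  "L x = x * ln x - (x-2) * ln (x-2) - 2 * ln (x-1)"

lemma L_mono:
  fixes a b :: real assumes "3 \<le> a" "a \<le> b" shows "L a \<le> L b"
proof -
  have "-L a \<ge> -L b"
  proof (rule DERIV_nonpos_imp_nonincreasing[OF assms(2)])
    fix x :: real assume x: "a \<le> x" "x \<le> b"
    hence x3: "x \<ge> 3" using assms by simp
    have d: "DERIV (\<lambda>x. - L x) x :> -((ln x + 1) - (ln (x-2) + 1) - 2/(x-1))"
      unfolding L_def using x3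
      apply -
      apply (rule derivative_eq_intros refl | simp)+
      done
    have "ln (x/(x-2)) \<ge> 2*(x/(x-2)-1)/(x/(x-2)+1)"
      by (rule ln_lower) (use x3 in \<open>simp add: field_simps\<close>)
    moreover have "2*(x/(x-2)-1)/(x/(x-2)+1) = 2/(x-1)"
    proof -
      have "x/(x-2) - 1 = 2/(x-2)" "x/(x-2)+1 = 2*(x-1)/(x-2)" using x3 by (simp_all add: field_simps)
      moreover have "x - 2 \<noteq> 0" "x - 1 \<noteq> 0" using x3 by auto
      ultimately show ?thesis using aux_eq2[of "x-2" "x-1"] by simp
    qed
    moreover have "ln (x/(x-2)) = ln x - ln (x-2)" using x3 by (simp add: ln_div)
    ultimately have "-((ln x + 1) - (ln (x-2) + 1) - 2/(x-1)) \<le> 0" by simp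
    then show "\<exists>d. DERIV (\<lambda>x. - L x) x :> d \<and> d \<le> 0" using d by blast
  qed
  then show ?thesis by simp
qed

lemma G_mono:
  fixes x y :: nat assumes "3 \<le> x" "x \<le> y"
  shows "real x ^ x * (real (y-2) ^ (y-2) * real (y-1)^2) \<le> real y ^ y * (real (x-2) ^ (x-2) * real (x-1)^2)"
proof -
  have rx: "real (x-2) = real x - 2" "real (x-1) = real x - 1" using assms by auto
  have ry: "real (y-2) = real y - 2" "real (y-1) = real y - 1" using assms by auto
  have Lm: "L (real x) \<le> L (real y)" by (rule L_mono) (use assms in auto)
  have "ln (real x ^ x * (real (y-2) ^ (y-2) * real (y-1)^2))
      = real x * ln x + (real y - 2) * ln (real y - 2) + 2 * ln (real y - 1)"
    using assms by (simp add: ln_mult ln_realpow ry)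
  also have "\<dots> \<le> real y * ln y + (real x - 2) * ln (real x - 2) + 2 * ln (real x - 1)"
    using Lm unfolding L_def by simp
  also have "\<dots> = ln (real y ^ y * (real (x-2) ^ (x-2) * real (x-1)^2))"
    using assms by (simp add: ln_mult ln_realpow rx)
  finally show ?thesis
    using assms by (subst (asm) ln_le_cancel_iff) auto
qed

lemma G_strict:
  fixes y :: nat assumes y3: "3 \<le> y"
  shows "real 2 ^ 2 * (real (y-2) ^ (y-2) * real (y-1)^2) < real y ^ y * (real (2-2) ^ (2-2) * real (2-1)^2)"
proof -
  have "real 3 ^ 3 * (real (y-2) ^ (y-2) * real (y-1)^2) \<le> real y ^ y * (real (3-2) ^ (3-2) * real (3-1)^2)"
    by (rule G_mono) (use y3 in auto)
  hence h: "27 * (real (y-2) ^ (y-2) * real (y-1)^2) \<le> real y ^ y * 4" by simp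
  have "real (y-2) ^ (y-2) * real (y-1)^2 > 0" using y3 by simp
  with h show ?thesis by simp
qed

lemma G_key:
  fixes x y :: nat assumes "2 \<le> x" "x \<le> y"
  shows "real x ^ x * (real (y-2) ^ (y-2) * real (y-1)^2) \<le> real y ^ y * (real (x-2) ^ (x-2) * real (x-1)^2)"
proof (cases "x = 2")
  case True
  show ?thesis
  proof (cases "y = 2")
    case True with \<open>x = 2\<close> show ?thesis by simp
  next
    case False
    with assms have "3 \<le> y" by simp
    from G_strict[OF this] True show ?thesis by (simp add: less_imp_le)
  qed
next
  case False
  show ?thesis by (rule G_mono) (use assms False in auto)
qed



definition F :: "nat \<Rightarrow> nat \<Rightarrow> real" where
  "F n p = sphere_prod_vol p (sqrt (real p / real n)) (n - p) (sqrt (real (n - p) / real n))"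

lemma F_nonneg: "F n p \<ge> 0"
  unfolding F_def sphere_prod_vol_def sphere_vol_def using U_pos[of p] U_pos[of "n-p"]
  by (intro mult_nonneg_nonneg) auto

lemma F_sym: "p \<le> n \<Longrightarrow> F n (n - p) = F n p"
  unfolding F_def sphere_prod_vol_def by simp

lemma sqrt_pow_sq: "0 \<le> a \<Longrightarrow> (sqrt a ^ k)^2 = a ^ k"
  by (metis power_mult mult.commute real_sqrt_pow2)

lemma F_sq: "(F n p)^2 = U p ^2 * U (n-p) ^2 * (real p / real n)^p * (real (n-p) / real n)^(n-p)"
  unfolding F_def sphere_prod_vol_def sphere_vol_def
  by (simp add: power_mult_distrib sqrt_pow_sq)

lemma aux_eq3: "((c*u/q)^2 * v^2 * (nn1/mm1)) = (c * u * v)^2/mm1 * (nn1/(q::real)^2)"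
  by (simp add: power_mult_distrib power_divide mult_ac)

lemma aux_eq4: "(u^2 * (c * v / q)^2 * (nn1/mm1)) = (c * u * v)^2/mm1 * (nn1/(q::real)^2)"
  by (simp add: power_mult_distrib power_divide mult_ac)

lemma step_sq:
  assumes "p + 2 \<le> n - p"
  defines "K \<equiv> (2*pi*U p*U (n-p-2))^2 / real n ^ n"
  shows "(F n (p+2))^2 = K * (real (p+2)^(p+2) * real (n-p-2)^(n-p-2) / real (p+1)^2)"
    and "(F n p)^2 = K * (real p^p * real (n-p)^(n-p) / real (n-p-1)^2)"
proof -
  define b where "b = n - p"
  have b2: "b \<ge> 2" using assms b_def by simp
  have nb: "n = p + b" using assms b_def by simp
  have e1: "n - (p+2) = b - 2" using nb by simp
  have Up2: "U (p+2) = 2*pi*U p / (real p + 1)" using U_rec[of p] by (simp add: numeral_2_eq_2)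
  have Ub: "U b = 2*pi*U (b-2) / (real (b-2) + 1)"
  proof -
    have "Suc (Suc (b-2)) = b" using b2 by simp
    then show ?thesis using U_rec[of "b-2"] by simp
  qed
  have rb: "real (b-2) + 1 = real (b - 1)" using b2 by simp
  have nn: "real n ^ (p+2) * real n ^ (b-2) = real n ^ n" 
  proof -
    have "p + 2 + (b-2) = n" using nb b2 by simp
    then show ?thesis by (metis power_add)
  qed
  have nn0: "real n ^ p * real n ^ b = real n ^ n" by (simp add: power_add[symmetric] nb)
  have bb: "n-p-2 = b-2" "n-p-1 = b-1" "n-p = b" by (simp_all add: b_def)
  have "(F n (p+2))^2 = U (p+2)^2 * U (b-2)^2 * (real (p+2)/real n)^(p+2) * (real (b-2)/real n)^(b-2)"
    unfolding F_sq e1 by simp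
  also have "\<dots> = (2*pi*U p / (real p + 1))^2 * U (b-2)^2 * (real (p+2)^(p+2) * real (b-2)^(b-2) / (real n ^ (p+2) * real n ^ (b-2)))"
    unfolding Up2 by (simp add: power_divide)
  also have "\<dots> = K * (real (p+2)^(p+2) * real (n-p-2)^(n-p-2) / real (p+1)^2)"
    unfolding nn K_def bb using aux_eq3[of "2*pi" "U p" "real p + 1" "U (b-2)" _ "real n ^ n"] by (simp add: add.commute)
  finally show "(F n (p+2))^2 = K * (real (p+2)^(p+2) * real (n-p-2)^(n-p-2) / real (p+1)^2)" .
  have "(F n p)^2 = U p^2 * U b^2 * (real p/real n)^p * (real b/real n)^b"
    unfolding F_sq b_def by simp
  also have "\<dots> = U p^2 * (2*pi*U (b-2) / real (b-1))^2 * (real p^p * real b^b / (real n ^ p * real n ^ b))"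
    unfolding Ub rb by (simp add: power_divide)
  also have "\<dots> = K * (real p^p * real (n-p)^(n-p) / real (n-p-1)^2)"
    unfolding nn0 K_def bb by (rule aux_eq4)
  finally show "(F n p)^2 = K * (real p^p * real (n-p)^(n-p) / real (n-p-1)^2)" .
qed

lemma K_nonneg: "(2*pi*U p*U q)^2 / real n ^ n \<ge> 0" by simp

lemma step:
  assumes "p + 2 \<le> n - p"
  shows "F n (p+2) \<le> F n p"
proof -
  have G: "real (p+2) ^ (p+2) * (real (n-p-2) ^ (n-p-2) * real (n-p-1)^2) \<le> real (n-p) ^ (n-p) * (real p ^ p * real (p+1)^2)"
    using G_key[of "p+2" "n-p"] assms by (simp add: numeral_2_eq_2)
  have pos1: "real (p+1)^2 > 0" by simp
  have pos2: "real (n-p-1)^2 > 0" using assms by simp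
  have "real (p+2)^(p+2) * real (n-p-2)^(n-p-2) / real (p+1)^2 \<le> real p^p * real (n-p)^(n-p) / real (n-p-1)^2"
    using G pos1 pos2 by (simp add: field_simps)
  hence "(F n (p+2))^2 \<le> (F n p)^2"
    unfolding step_sq[OF assms] by (rule mult_left_mono) (rule K_nonneg)
  thus ?thesis using F_nonneg by (rule power2_le_imp_le)
qed

lemma step_strict:
  assumes "3 \<le> n"
  shows "F n 2 < F n 0"
proof -
  have a: "0 + 2 \<le> n - 0" using assms by simp
  have G: "real 2 ^ 2 * (real (n-2) ^ (n-2) * real (n-1)^2) < real n ^ n * (real (2-2) ^ (2-2) * real (2-1)^2)"
    by (rule G_strict) (use assms in auto)
  have pos2: "real (n-1)^2 > 0" using assms by simp
  have "real (0+2)^(0+2) * real (n-0-2)^(n-0-2) / real (0+1)^2 < real 0^0 * real (n-0)^(n-0) / real (n-0-1)^2"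
    using G pos2 by (simp add: field_simps)
  moreover have "(2*pi*U 0*U (n-0-2))^2 / real n ^ n > 0"
    by (intro divide_pos_pos) (use U_pos[of "n-2"] assms in \<open>simp_all add: U0\<close>)
  ultimately have h: "(F n (0+2))^2 < (F n 0)^2"
    unfolding step_sq[OF a] by (rule mult_strict_left_mono)
  have "F n (0+2) < F n 0" by (rule power2_less_imp_less[OF h F_nonneg])
  thus ?thesis by (simp only: add_0)
qed

lemma chain: "p + 2*k \<le> n - (p + 2*k) \<Longrightarrow> F n (p + 2*k) \<le> F n p"
proof (induction k)
  case 0 then show ?case by simp
next
  case (Suc k)
  have a: "(p + 2*k) + 2 \<le> n - (p + 2*k)" using Suc.prems by simp
  have "F n (p + 2*Suc k) = F n ((p + 2*k) + 2)" by simp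
  also have "\<dots> \<le> F n (p + 2*k)" by (rule step[OF a])
  also have "\<dots> \<le> F n p" by (rule Suc.IH) (use Suc.prems in simp)
  finally show ?case .
qed

lemma F0: "n > 0 \<Longrightarrow> F n 0 = 2 * U n"
  unfolding F_def sphere_prod_vol_def sphere_vol_def by (simp add: U0)

lemma pow_half: assumes "n \<ge> 2" shows "(real (n-1) / real n)^(n-1) \<le> 1/2"
proof -
  define m where "m = n - 1"
  have m1: "m \<ge> 1" using assms m_def by simp
  have "1 + real m * (1 / real m) \<le> (1 + 1/real m)^m"
  proof (rule Bernoulli_inequality)
    have "0 \<le> 1/real m" by simp
    then show "-1 \<le> 1/real m" by linarith
  qed
  hence "2 \<le> (1 + 1/real m)^m" using m1 by simp
  moreover have "(1 + 1/real m) = real n / real m" using m1 m_def assms by (simp add: field_simps)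
  ultimately have "2 \<le> (real n / real m)^m" by simp
  hence "2 \<le> 1 / (real m / real n)^m" by (simp add: power_divide)
  moreover have "(real m / real n)^m > 0" using m1 m_def by simp
  moreover have aux: "\<And>x::real. x > 0 \<Longrightarrow> 2 \<le> 1/x \<Longrightarrow> x \<le> 1/2" by (simp add: field_simps)
  ultimately show ?thesis unfolding m_def by blast
qed

lemma F1: assumes "n \<ge> 2" shows "F n 1 < 2 * U n"
proof -
  define g1 where "g1 = Gamma (real n / 2)"
  define g2 where "g2 = Gamma ((real n + 1) / 2)"
  define P where "P = pi powr (real n / 2)"
  have g1p: "g1 > 0" using assms by (simp add: g1_def)
  have g2p: "g2 > 0" by (simp add: g2_def)
  have Pp: "P > 0" by (simp add: P_def)
  have Un1: "U (n-1) = 2 * P / g1"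
    unfolding unit_sphere_vol_def P_def g1_def using assms by (simp add: of_nat_diff)
  have Un: "U n = 2 * P * sqrt pi / g2"
  proof -
    have "pi powr ((real n + 1) / 2) = P * pi powr (1/2)"
      unfolding P_def by (simp add: powr_add[symmetric] add_divide_distrib)
    thus ?thesis unfolding unit_sphere_vol_def g2_def by (simp add: powr_half_sqrt add.commute)
  qed
  have gh: "g2^2 \<le> (real n / 2) * g1^2"
    using Gamma_half_le[of "real n / 2"] assms unfolding g1_def g2_def by (simp add: add_divide_distrib)
  have key: "U (n-1)^2 * (2*pi) \<le> real n * U n ^2"
  proof -
    have "U (n-1)^2 * (2*pi) = 8 * pi * P^2 / g1^2" unfolding Un1 by (simp add: power_divide power_mult_distrib)
    also have "\<dots> \<le> 4 * real n * pi * P^2 / g2^2"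
      using gh g1p g2p Pp by (simp add: field_simps)
    also have "\<dots> = real n * U n ^2" unfolding Un by (simp add: power_divide power_mult_distrib)
    finally show ?thesis .
  qed
  have r: "(real (n-1) / real n)^(n-1) \<le> 1/2" by (rule pow_half[OF assms])
  have rpos: "(real (n-1) / real n)^(n-1) \<ge> 0" by simp
  have nposr: "real n > 0" using assms by simp
  have "(F n 1)^2 = (2*pi)^2 * U (n-1)^2 * (1 / real n) * (real (n-1) / real n)^(n-1)"
    unfolding F_sq U1 by simp
  also have "\<dots> = (2*pi) * (U (n-1)^2 * (2*pi)) / real n * (real (n-1) / real n)^(n-1)"
    by (simp add: power2_eq_square)
  also have "\<dots> \<le> (2*pi) * (real n * U n ^2) / real n * (real (n-1) / real n)^(n-1)"
    using key nposr rpos by (intro mult_right_mono divide_right_mono mult_left_mono) auto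
  also have "\<dots> = 2 * pi * U n^2 * (real (n-1) / real n)^(n-1)" using nposr by simp
  also have "\<dots> \<le> 2 * pi * U n^2 * (1/2)"
    using r by (intro mult_left_mono) auto
  also have "\<dots> < (2 * U n)^2"
  proof -
    have u2: "U n^2 > 0" using U_pos[of n] by simp
    have "pi * U n^2 < 4 * U n^2" by (rule mult_strict_right_mono[OF pi_less_4 u2])
    moreover have "2 * pi * U n^2 * (1/2) = pi * U n^2" by simp
    moreover have "(2 * U n)^2 = 4 * U n^2" by (simp add: power_mult_distrib)
    ultimately show ?thesis by simp
  qed
  finally have h: "(F n 1)^2 < (2 * U n)^2" .
  show ?thesis by (rule power2_less_imp_less[OF h]) (use U_pos[of n] in simp)
qed



definition DD :: "real \<Rightarrow> real" where
  "DD x = (x-1)*ln(x-1)/2 - x*ln x + (x+2)*ln(x+2) - (x+3)*ln(x+3)/2 - 2*ln(x+1) + ln x + ln(x+2)"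
definition D1 :: "real \<Rightarrow> real" where
  "D1 x = (ln(x-1) - 2*ln x + 2*ln(x+2) - ln(x+3))/2 - 2/(x+1) + 1/x + 1/(x+2)"
definition D2 :: "real \<Rightarrow> real" where
  "D2 x = (2/(x-1) - 4/x + 4/(x+2) - 2/(x+3))/4 + 2/((x+1)*(x+1)) - 1/(x*x) - 1/((x+2)*(x+2))"

lemma DD_deriv: "x > 1 \<Longrightarrow> DERIV DD x :> D1 x"
  unfolding DD_def D1_def
  apply (rule derivative_eq_intros refl | simp)+
  apply (simp add: field_simps)
  done

lemma D1_deriv: "x > 1 \<Longrightarrow> DERIV D1 x :> D2 x"
  unfolding D1_def D2_def
  apply (rule derivative_eq_intros refl | simp)+
  done

lemma DD_lim: "(DD \<longlongrightarrow> 0) at_top"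
  unfolding DD_def by real_asymp
lemma D1_lim: "(D1 \<longlongrightarrow> 0) at_top"
  unfolding D1_def by real_asymp

lemma D2_eq: assumes "x > 1" shows "D2 x * (2*x^2*(x-1)*(x+1)^2*(x+2)^2*(x+3)) = 40*x^2+80*x+24"
proof -
  define a where "a = 1/(x-1)"
  define b where "b = 1/x"
  define c where "c = 1/(x+1)"
  define d where "d = 1/(x+2)"
  define e where "e = 1/(x+3)"
  have r: "a*(x-1) = 1" "b*x = 1" "c*(x+1) = 1" "d*(x+2) = 1" "e*(x+3) = 1"
    using assms by (auto simp: a_def b_def c_def d_def e_def)
  have "D2 x = (2*a - 4*b + 4*d - 2*e)/4 + 2*(c*c) - b*b - d*d"
    unfolding D2_def a_def b_def c_def d_def e_def by simp
  with r show ?thesis by algebra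
qed

lemma D2_nonneg: assumes "x > 1" shows "D2 x \<ge> 0"
proof (rule ccontr)
  assume "\<not> D2 x \<ge> 0"
  hence neg: "D2 x < 0" by simp
  have "2*x^2*(x-1)*(x+1)^2*(x+2)^2*(x+3) > 0" using assms by simp
  hence "D2 x * (2*x^2*(x-1)*(x+1)^2*(x+2)^2*(x+3)) < 0" using neg by (simp add: mult_neg_pos)
  moreover have "40*x^2+80*x+24 > 0" using assms by (simp add: add_pos_pos)
  ultimately show False using D2_eq[OF assms] by simp
qed

lemma D1_mono: assumes "1 < x" "x \<le> y" shows "D1 x \<le> D1 y"
proof -
  have "-D1 x \<ge> -D1 y"
  proof (rule DERIV_nonpos_imp_nonincreasing[OF assms(2)])
    fix t assume t: "x \<le> t" "t \<le> y"
    hence t1: "t > 1" using assms by simp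
    have "DERIV (\<lambda>t. - D1 t) t :> - D2 t" by (rule DERIV_minus[OF D1_deriv[OF t1]])
    moreover have "- D2 t \<le> 0" using D2_nonneg[OF t1] by simp
    ultimately show "\<exists>d. DERIV (\<lambda>t. - D1 t) t :> d \<and> d \<le> 0" by blast
  qed
  thus ?thesis by simp
qed

lemma D1_nonpos: assumes "1 < x" shows "D1 x \<le> 0"
proof (rule tendsto_lowerbound[OF D1_lim])
  show "\<forall>\<^sub>F y in at_top. D1 x \<le> D1 y"
    using eventually_ge_at_top[of x] by eventually_elim (rule D1_mono[OF assms])
qed simp

lemma DD_mono: assumes "1 < x" "x \<le> y" shows "DD y \<le> DD x"
proof (rule DERIV_nonpos_imp_nonincreasing[OF assms(2)])
  fix t assume t: "x \<le> t" "t \<le> y"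
  hence t1: "t > 1" using assms by simp
  show "\<exists>d. DERIV DD t :> d \<and> d \<le> 0" using DD_deriv[OF t1] D1_nonpos[OF t1] by blast
qed

lemma DD_nonneg: assumes "1 < x" shows "DD x \<ge> 0"
proof (rule tendsto_upperbound[OF DD_lim])
  show "\<forall>\<^sub>F y in at_top. DD y \<le> DD x"
    using eventually_ge_at_top[of x] by eventually_elim (rule DD_mono[OF assms])
qed simp



definition S :: "real \<Rightarrow> real" where
  "S M = ((M+1)/2)*ln(M+1) + ((M-1)/2)*ln(M-1) - M*ln M"

lemma S_DD: "S M - S (M+2) - (2*ln(M+1) - ln M - ln(M+2)) = DD M"
  unfolding S_def DD_def by (simp add: algebra_simps add_divide_distrib diff_divide_distrib)

lemma S_nonneg: assumes "M \<ge> 2" shows "S M \<ge> 0"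
proof -
  let ?g = "\<lambda>u. (M+u)*ln(M+u) + (M-u)*ln(M-u)"
  have "-?g 0 \<ge> -?g 1"
  proof (rule DERIV_nonpos_imp_nonincreasing[of 0 1])
    fix u :: real assume u: "0 \<le> u" "u \<le> 1"
    have p1: "M + u > 0" "M - u > 0" using u assms by auto
    have d: "DERIV (\<lambda>u. - ?g u) u :> -((ln (M+u) + 1) - (ln (M-u) + 1))"
      using p1
      apply -
      apply (rule derivative_eq_intros refl | simp)+
      done
    have "ln (M-u) \<le> ln (M+u)" using p1 u by simp
    hence "-((ln (M+u) + 1) - (ln (M-u) + 1)) \<le> 0" by simp
    with d show "\<exists>d. DERIV (\<lambda>u. - ?g u) u :> d \<and> d \<le> 0" by blast
  qed simp
  hence "?g 0 \<le> ?g 1" by simp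
  hence "2*M*ln M \<le> (M+1)*ln(M+1) + (M-1)*ln(M-1)" by simp
  thus ?thesis unfolding S_def by (simp add: field_simps)
qed

definition lt :: "real \<Rightarrow> real" where
  "lt M = 2*ln(Gamma((M+1)/2)) - 2*ln(Gamma(M/2))"

lemma lt_rec: assumes "M > 0" shows "lt (M+2) = lt M + 2*ln(M+1) - 2*ln M"
proof -
  have e1: "(M+2+1)/2 = (M+1)/2 + 1" by (simp add: field_simps)
  have e2: "(M+2)/2 = M/2 + 1" by (simp add: field_simps)
  have g1: "Gamma ((M+2+1)/2) = ((M+1)/2) * Gamma ((M+1)/2)"
    unfolding e1 by (rule Gamma_plus1_pos) (use assms in simp)
  have g2: "Gamma ((M+2)/2) = (M/2) * Gamma (M/2)"
    unfolding e2 by (rule Gamma_plus1_pos) (use assms in simp)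
  have p: "Gamma ((M+1)/2) > 0" "Gamma (M/2) > 0" using assms by auto
  have "lt (M+2) = 2*ln ((M+1)/2 * Gamma ((M+1)/2)) - 2*ln (M/2 * Gamma (M/2))"
    unfolding lt_def g1 g2 ..
  also have "\<dots> = 2*(ln (M+1) - ln 2 + ln (Gamma ((M+1)/2))) - 2*(ln M - ln 2 + ln (Gamma (M/2)))"
  proof -
    have a1: "ln ((M+1)/2 * Gamma ((M+1)/2)) = ln ((M+1)/2) + ln (Gamma ((M+1)/2))"
      by (rule ln_mult_pos) (use p assms in auto)
    have a2: "ln (M/2 * Gamma (M/2)) = ln (M/2) + ln (Gamma (M/2))"
      by (rule ln_mult_pos) (use p assms in auto)
    have a3: "ln ((M+1)/2) = ln (M+1) - ln 2" by (rule ln_divide_pos) (use assms in auto)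
    have a4: "ln (M/2) = ln M - ln 2" by (rule ln_divide_pos) (use assms in auto)
    show ?thesis unfolding a1 a2 a3 a4 ..
  qed
  also have "\<dots> = lt M + 2*ln(M+1) - 2*ln M" unfolding lt_def by simp
  finally show ?thesis .
qed

lemma lt_lower: assumes "M > 1" shows "lt M \<ge> ln ((M-1)/2)"
proof -
  have h: "Gamma (M/2)^2 \<le> Gamma (M/2 + 1/2)^2 / (M/2 - 1/2)"
    by (rule Gamma_half_ge) (use assms in simp)
  have e: "M/2 + 1/2 = (M+1)/2" "M/2 - 1/2 = (M-1)/2" by (simp_all add: field_simps)
  have p: "Gamma ((M+1)/2) > 0" "Gamma (M/2) > 0" "(M-1)/2 > 0" using assms by auto
  from h have "(M-1)/2 * Gamma (M/2)^2 \<le> Gamma ((M+1)/2)^2"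
    unfolding e using p by (simp add: field_simps)
  moreover have q: "(M-1)/2 * Gamma (M/2)^2 > 0" using mult_pos_pos[OF p(3) zero_less_power[OF p(2), of 2]] by simp
  moreover have q2: "Gamma ((M+1)/2)^2 > 0" using zero_less_power[OF p(1), of 2] .
  ultimately have "ln ((M-1)/2 * Gamma (M/2)^2) \<le> ln (Gamma ((M+1)/2)^2)"
    using ln_le_cancel_iff[OF q q2] by simp
  moreover have "ln ((M-1)/2 * Gamma (M/2)^2) = ln ((M-1)/2) + 2 * ln (Gamma (M/2))"
    using ln_mult_pos[OF p(3) zero_less_power[OF p(2), of 2]] by (simp add: ln_realpow)
  moreover have "ln (Gamma ((M+1)/2)^2) = 2 * ln (Gamma ((M+1)/2))" by (simp add: ln_realpow)
  ultimately show ?thesis unfolding lt_def by simp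
qed

definition phi :: "real \<Rightarrow> real" where
  "phi M = lt M - ln (M/2) + S M"

lemma phi_step: assumes "M > 1" shows "phi (M+2) \<le> phi M"
proof -
  have "phi (M+2) - phi M = -(DD M)"
  proof -
    have "ln ((M+2)/2) = ln (M+2) - ln 2" "ln (M/2) = ln M - ln 2" using assms by (simp_all add: ln_div)
    moreover have "lt (M+2) = lt M + 2*ln(M+1) - 2*ln M" using lt_rec assms by simp
    ultimately show ?thesis unfolding phi_def using S_DD[of M] by simp
  qed
  thus ?thesis using DD_nonneg[OF assms] by simp
qed

lemma phi_lower: assumes "M \<ge> 2" shows "phi M \<ge> -1/(M-1)"
proof -
  have a: "lt M \<ge> ln ((M-1)/2)" by (rule lt_lower) (use assms in simp)
  have b: "S M \<ge> 0" by (rule S_nonneg[OF assms])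
  have c: "ln ((M-1)/2) - ln (M/2) = - ln (M/(M-1))" using assms by (simp add: ln_div)
  have d: "ln (M/(M-1)) \<le> M/(M-1) - 1" by (rule ln_le_minus_one) (use assms in simp)
  have e: "M/(M-1) - 1 = 1/(M-1)" using assms by (simp add: field_simps)
  show ?thesis unfolding phi_def using a b c d e by linarith
qed

lemma phi_chain: assumes "M > 1" shows "phi (M + 2 * real k) \<le> phi M"
proof (induction k)
  case 0 then show ?case by simp
next
  case (Suc k)
  have "phi (M + 2 * real (Suc k)) = phi ((M + 2 * real k) + 2)" by (simp add: algebra_simps)
  also have "\<dots> \<le> phi (M + 2 * real k)" by (rule phi_step) (use assms in simp)
  finally show ?case using Suc.IH by simp
qed

lemma phi_nonneg: assumes "M \<ge> 2" shows "phi M \<ge> 0"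
proof (rule ccontr)
  assume "\<not> phi M \<ge> 0"
  hence neg: "phi M < 0" by simp
  obtain k :: nat where k: "1 / (- phi M) < real k" using reals_Archimedean2 by blast
  have kpos: "real k > 0" using k neg by (smt (verit) divide_pos_pos)
  have "phi (M + 2 * real k) \<ge> -1/((M + 2*real k) - 1)"
    by (rule phi_lower) (use assms in simp)
  moreover have "phi (M + 2 * real k) \<le> phi M" by (rule phi_chain) (use assms in simp)
  moreover have "1/((M + 2*real k) - 1) < - phi M"
  proof -
    have "1/((M + 2*real k) - 1) \<le> 1 / real k"
      using assms kpos by (intro divide_left_mono) auto
    also have "\<dots> < - phi M" using k neg kpos by (simp add: field_simps)
    finally show ?thesis .
  qed
  ultimately show False by linarith
qed



lemma final_alg:
  fixes P s g1 g2 mm N A B :: real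
  assumes "P > 0" "s > 0" "g1 > 0" "g2 > 0" "mm > 0" "N > 0"
    and key: "g1^4 * (mm^2 * A) \<le> 4 * g2^4 * B"
  shows "(2*P* s/g2)^2 * ((2*P* s/g2)^2 * (A/N)) \<le> (2*P/g1)^2 * ((2* s^2*(2*P/g1)/mm)^2 * (B/N))"
proof -
  define C where "C = 16*P^4* s^4/(g1^4*g2^4*mm^2*N)"
  have C0: "C \<ge> 0" unfolding C_def using assms by simp
  have l: "(2*P* s/g2)^2 * ((2*P* s/g2)^2 * (A/N)) = C * (g1^4 * (mm^2 * A))"
    unfolding C_def using assms by (simp add: field_simps power_mult_distrib)
  have r: "(2*P/g1)^2 * ((2* s^2*(2*P/g1)/mm)^2 * (B/N)) = C * (4 * g2^4 * B)"
    unfolding C_def using assms by (simp add: field_simps power_mult_distrib)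
  show ?thesis unfolding l r by (rule mult_left_mono[OF key C0])
qed

lemma aux_ln4: "(a::real) > 0 \<Longrightarrow> b > 0 \<Longrightarrow> c > 0 \<Longrightarrow> d > 0 \<Longrightarrow> ln (a*b*(c*d)) = ln a + ln b + ln c + ln d"
  by (simp add: ln_mult_pos)

lemma mid:
  fixes m :: nat
  assumes "m \<ge> 2"
  shows "F (2*m) m \<le> F (2*m) (m-1)"
proof -
  define g1 where "g1 = Gamma (real m / 2)"
  define g2 where "g2 = Gamma ((real m + 1) / 2)"
  define P where "P = pi powr (real m / 2)"
  have g1p: "g1 > 0" using assms by (simp add: g1_def)
  have g2p: "g2 > 0" by (simp add: g2_def)
  have Pp: "P > 0" by (simp add: P_def)
  have mr: "real m \<ge> 2" using assms by simp
  have Un1: "U (m-1) = 2 * P / g1"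
    unfolding unit_sphere_vol_def P_def g1_def using assms by (simp add: of_nat_diff)
  have Um: "U m = 2 * P * sqrt pi / g2"
  proof -
    have "pi powr ((real m + 1) / 2) = P * pi powr (1/2)"
      unfolding P_def by (simp add: powr_add[symmetric] add_divide_distrib)
    thus ?thesis unfolding unit_sphere_vol_def g2_def by (simp add: powr_half_sqrt add.commute)
  qed
  have Ump1: "U (m+1) = 2 * pi * U (m-1) / real m"
  proof -
    have "Suc (Suc (m-1)) = m+1" using assms by simp
    moreover have "real (m-1) + 1 = real m" using assms by simp
    ultimately show ?thesis using U_rec[of "m-1"] by simp
  qed
  have ph: "phi (real m) \<ge> 0" by (rule phi_nonneg[OF mr])
  have m1: "real (m-1) = real m - 1" using assms by simp
  have key: "g1^4 * (real m^2 * real m^(2*m)) \<le> 4 * g2^4 * (real (m-1)^(m-1) * real (m+1)^(m+1))"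
  proof -
    have pos1: "g1^4 * (real m^2 * real m^(2*m)) > 0" using g1p assms by simp
    have pos2: "4 * g2^4 * (real (m-1)^(m-1) * real (m+1)^(m+1)) > 0" using g2p assms by simp
    have lL: "ln (g1^4 * (real m^2 * real m^(2*m))) = 4 * ln g1 + (2*real m + 2) * ln (real m)"
      using g1p assms by (simp add: ln_mult_pos ln_realpow algebra_simps)
    have lR: "ln (4 * g2^4 * (real (m-1)^(m-1) * real (m+1)^(m+1))) =
        2 * ln 2 + 4 * ln g2 + (real m - 1) * ln (real m - 1) + (real m + 1) * ln (real m + 1)"
    proof -
      have l4: "ln (4::real) = 2 * ln 2" using ln_realpow[of 2 2] by simp
      have pa: "real (m-1) ^ (m-1) > 0" "real (m+1) ^ (m+1) > 0" "g2^4 > 0" using assms g2p by auto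
      have "ln (4 * g2^4 * (real (m-1)^(m-1) * real (m+1)^(m+1))) =
          ln 4 + ln (g2^4) + ln (real (m-1)^(m-1)) + ln (real (m+1)^(m+1))"
        by (rule aux_ln4) (use pa in auto)
      also have "\<dots> = 2 * ln 2 + 4 * ln g2 + real (m-1) * ln (real (m-1)) + real (m+1) * ln (real (m+1))"
        unfolding l4 ln_realpow by simp
      finally show ?thesis unfolding m1 by (simp add: add.commute)
    qed
    have lm2: "ln (real m / 2) = ln (real m) - ln 2" using mr by (simp add: ln_divide_pos)
    have eq: "(2 * ln 2 + 4 * ln g2 + (real m - 1) * ln (real m - 1) + (real m + 1) * ln (real m + 1))
        - (4 * ln g1 + (2*real m + 2) * ln (real m)) = 2 * phi (real m)"
      unfolding phi_def lt_def S_def g1_def g2_def lm2 by (simp add: algebra_simps add_divide_distrib diff_divide_distrib)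
    have "4 * ln g1 + (2*real m + 2) * ln (real m) \<le>
        2 * ln 2 + 4 * ln g2 + (real m - 1) * ln (real m - 1) + (real m + 1) * ln (real m + 1)"
      using eq ph by linarith
    hence "ln (g1^4 * (real m^2 * real m^(2*m))) \<le> ln (4 * g2^4 * (real (m-1)^(m-1) * real (m+1)^(m+1)))"
      unfolding lL lR .
    thus ?thesis using ln_le_cancel_iff[OF pos1 pos2] by simp
  qed
  define N where "N = real (2*m) ^ (2*m)"
  define A where "A = real m ^ (2*m)"
  define B where "B = real (m-1)^(m-1) * real (m+1)^(m+1)"
  have Np: "N > 0" unfolding N_def using assms by simp
  have pw: "(real m / real (2*m))^m * (real m / real (2*m))^m = A / N"
    unfolding N_def A_def by (simp only: power_divide times_divide_times_eq power_add[symmetric] mult_2)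
  have Fm: "(F (2*m) m)^2 = U m^2 * (U m^2 * (A/N))"
  proof -
    have e: "2*m - m = m" by simp
    show ?thesis by (simp only: F_sq e mult.assoc pw)
  qed
  have pw1: "(real (m-1) / real (2*m))^(m-1) * (real (m+1) / real (2*m))^(m+1) = B / N"
  proof -
    have e2: "(m-1) + (m+1) = 2*m" using assms by simp
    have nn: "real (2*m) ^ (m-1) * real (2*m) ^ (m+1) = N" unfolding N_def using e2 by (metis power_add)
    show ?thesis unfolding power_divide B_def by (simp only: times_divide_times_eq nn)
  qed
  have Fm1: "(F (2*m) (m-1))^2 = U (m-1)^2 * (U (m+1)^2 * (B/N))"
  proof -
    have e: "2*m - (m-1) = m+1" using assms by simp
    show ?thesis by (simp only: F_sq e mult.assoc pw1)
  qed
  have sp: "(sqrt pi)^2 = pi" by simp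
  have fa: "(2*P* sqrt pi/g2)^2 * ((2*P* sqrt pi/g2)^2 * (A/N)) \<le> (2*P/g1)^2 * ((2*(sqrt pi)^2*(2*P/g1)/real m)^2 * (B/N))"
    by (rule final_alg[OF Pp _ g1p g2p _ Np]) (use key assms in \<open>simp_all add: A_def B_def\<close>)
  have "(F (2*m) m)^2 \<le> (F (2*m) (m-1))^2"
    unfolding Fm Fm1 Um Ump1 Un1 using fa unfolding sp .
  thus ?thesis using F_nonneg by (rule power2_le_imp_le)
qed

lemma floor_ceil_half:
  fixes n :: nat
  shows "nat \<lfloor>real n / 2\<rfloor> = n div 2" and "nat \<lceil>real n / 2\<rceil> = n - n div 2"
proof -
  define k where "k = n div 2"
  have k: "n = 2*k \<or> n = 2*k+1" unfolding k_def by presburger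
  show "nat \<lfloor>real n / 2\<rfloor> = n div 2"
    using floor_divide_of_nat_eq[of n 2, where 'a=real] by simp
  show "nat \<lceil>real n / 2\<rceil> = n - n div 2"
  proof (cases "n = 2*k")
    case True
    then show ?thesis by simp
  next
    case False
    with k have n: "n = 2*k+1" by simp
    have c: "\<lceil>real n / 2\<rceil> = int k + 1"
    proof -
      have "real n / 2 = real k + 1/2" using n by simp
      thus ?thesis by (simp only:) (rule ceiling_unique, auto)
    qed
    show ?thesis using n c by simp
  qed
qed

theorem mainTheorem13:
  fixes n p :: nat
  assumes "n \<ge> 2" and "1 \<le> p" and "p \<le> n - 1"
  shows "2 * unit_sphere_vol n >
           sphere_prod_vol p (sqrt (real p / real n)) (n - p) (sqrt (real (n - p) / real n))
       \<and> sphere_prod_vol p (sqrt (real p / real n)) (n - p) (sqrt (real (n - p) / real n))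
           \<ge> sphere_prod_vol (nat \<lfloor>real n / 2\<rfloor>) (sqrt (real (nat \<lfloor>real n / 2\<rfloor>) / real n))
                             (nat \<lceil>real n / 2\<rceil>) (sqrt (real (nat \<lceil>real n / 2\<rceil>) / real n))"
proof -
  define h where "h = n div 2"
  have lhs: "sphere_prod_vol p (sqrt (real p / real n)) (n - p) (sqrt (real (n - p) / real n)) = F n p"
    unfolding F_def ..
  have rhs: "sphere_prod_vol (nat \<lfloor>real n / 2\<rfloor>) (sqrt (real (nat \<lfloor>real n / 2\<rfloor>) / real n))
                             (nat \<lceil>real n / 2\<rceil>) (sqrt (real (nat \<lceil>real n / 2\<rceil>) / real n)) = F n h"
    unfolding F_def floor_ceil_half h_def ..
  define q where "q = min p (n - p)"
  have Fq: "F n p = F n q"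
  proof (cases "p \<le> n - p")
    case True then show ?thesis by (simp add: q_def)
  next
    case False
    then have "q = n - p" by (simp add: q_def)
    then show ?thesis using F_sym[of p n] assms by simp
  qed
  have q1: "1 \<le> q" and qq: "q \<le> n - q" and qh: "q \<le> h"
    using assms by (auto simp: q_def h_def)
  have part1: "F n q < 2 * U n"
  proof (cases "even q")
    case True
    then obtain k' where k': "q = 2*k'" by (rule evenE)
    define k where "k = k' - 1"
    have k: "q = 2 + 2*k" using k' q1 unfolding k_def by simp
    have n3: "3 \<le> n" using qq k by simp
    have "F n q \<le> F n 2" using chain[of 2 k n] qq k by simp
    also have "\<dots> < F n 0" by (rule step_strict[OF n3])
    also have "\<dots> = 2 * U n" using F0 assms by simp
    finally show ?thesis .
  next
    case False
    then obtain k' where k': "q = 2*k' + 1" by (rule oddE)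
    then have k: "q = 1 + 2*k'" by simp
    have "F n q \<le> F n 1" using chain[of 1 k' n] qq k by simp
    also have "\<dots> < 2 * U n" by (rule F1[OF assms(1)])
    finally show ?thesis .
  qed
  define k where "k = (h - q) div 2"
  define j where "j = q + 2*k"
  have jh: "j = h \<or> j + 1 = h" unfolding j_def k_def using qh by presburger
  have jn: "j \<le> n - j" using jh unfolding h_def by auto
  have Fj: "F n j \<le> F n q" unfolding j_def by (rule chain) (use jn j_def in simp)
  have part2: "F n h \<le> F n q"
  proof (cases "j = h")
    case True then show ?thesis using Fj by simp
  next
    case False
    with jh have jh1: "j + 1 = h" by simp
    show ?thesis
    proof (cases "even n")
      case True
      then have n2: "n = 2*h" unfolding h_def by simp
      have h2: "h \<ge> 2" using jh1 q1 unfolding j_def by simp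
      have "F n h \<le> F n (h-1)" using mid[OF h2] n2 by simp
      also have "h - 1 = j" using jh1 by simp
      finally show ?thesis using Fj by simp
    next
      case False
      then have n2: "n = 2*h+1" unfolding h_def by presburger
      have a: "j + 2 \<le> n - j" using n2 jh1 by simp
      have "F n h = F n (n - h)" using F_sym[of h n] n2 by simp
      also have "n - h = j + 2" using n2 jh1 by simp
      also have "F n (j+2) \<le> F n j" by (rule step[OF a])
      finally show ?thesis using Fj by simp
    qed
  qed
  show ?thesis unfolding lhs rhs Fq using part1 part2 by simp
qed

end
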